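(* Let $\mathcal{C}$ be a d-category and $f:Y\to X$ a morphism of $\mathcal{C}$-automata such that $f$ is future open, $\bot_X\subseteq f(\bot_Y)$ and $\top_Y=f^{-1}(\top_X)$. Then $\mathrm{Lang}(Y)=\mathrm{Lang}(X)$.
   Context: A d-category is a small category $\mathcal{C}$ with wide subcategories $\mathcal{C}^+$ (formorphisms) and $\mathcal{C}^-$ (backmorphisms) such that an invertible $\varphi$ is in $\mathcal{C}^+$ iff $\varphi^{-1}\in\mathcal{C}^-$. A $\mathcal{C}$-automaton is a presheaf $X:\mathcal{C}^{op}\to\mathbf{Set}$ with sets $\bot_X,\top_X$ of start and accept elements (elements being pairs $(U,x)$, $x\in X[U]$); morphisms of automata are presheaf maps sending start elements to start elements and accept elements to accept elements. A presheaf map $f:Y\to X$ is future open if for every $\varphi\in\mathcal{C}^+(V,U)$, $y\in Y[V]$, $x\in X[U]$ with $X[\varphi](x)=f(y)$ there is $\bar y\in Y[U]$ with $Y[\varphi](\bar y)=y$ and $f(\bar y)=x$. A linear category is a bipointed d-category isomorphic to a finite (possibly empty) concatenation (gluing $\top$ to $\bot$) of $\mathbf S$ (formorphism $\bot\to\top$), $\mathbf T$ (backmorphism $\top\to\bot$), $\mathbf I$ (inverse pair); a path is a d-functor $\omega:\mathcal I\to\mathcal{C}$ from one; its track object is the automaton $\operatorname{colim}_i\mathcal{C}(-,\omega(i))$ with single start element the image of $\mathrm{id}_{\omega(\bot)}$ and single accept element the image of $\mathrm{id}_{\omega(\top)}$; track objects are automata isomorphic to such. $\mathrm{Lang}(X)$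 is the class of track objects $\Gamma$ admitting a morphism of automata $\Gamma\to X$. *)

theory Defs
  imports Main
begin

text \<open>A small category is given by a set of objects, hom-sets, composition
  (cmp g f = g after f, for f : A -> B, g : B -> C) and identities.
  fwd A B are the formorphisms A -> B (the wide subcategory C+),
  bwd A B the backmorphisms A -> B (the wide subcategory C-).\<close>

record ('o, 'm) dcat =
  obj :: "'o set"
  hom :: "'o \<Rightarrow> 'o \<Rightarrow> 'm set"
  cmp :: "'m \<Rightarrow> 'm \<Rightarrow> 'm"
  idm :: "'o \<Rightarrow> 'm"
  fwd :: "'o \<Rightarrow> 'o \<Rightarrow> 'm set"
  bwd :: "'o \<Rightarrow> 'o \<Rightarrow> 'm set"

definition category :: "('o, 'm, 'z) dcat_scheme \<Rightarrow> bool" where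
  "category C \<longleftrightarrow>
     (\<forall>A B. hom C A B \<noteq> {} \<longrightarrow> A \<in> obj C \<and> B \<in> obj C) \<and>
     (\<forall>A \<in> obj C. idm C A \<in> hom C A A) \<and>
     (\<forall>A B Z f g. f \<in> hom C A B \<longrightarrow> g \<in> hom C B Z \<longrightarrow> cmp C g f \<in> hom C A Z) \<and>
     (\<forall>A B f. f \<in> hom C A B \<longrightarrow> cmp C (idm C B) f = f \<and> cmp C f (idm C A) = f) \<and>
     (\<forall>A B Z W f g h. f \<in> hom C A B \<longrightarrow> g \<in> hom C B Z \<longrightarrow> h \<in> hom C Z W \<longrightarrow>
        cmp C h (cmp C g f) = cmp C (cmp C h g) f)"

definition inverse_pair :: "('o, 'm, 'z) dcat_scheme \<Rightarrow> 'o \<Rightarrow> 'o \<Rightarrow> 'm \<Rightarrow> 'm \<Rightarrow> bool" where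
  "inverse_pair C A B \<phi> \<psi> \<longleftrightarrow> \<phi> \<in> hom C A B \<and> \<psi> \<in> hom C B A \<and>
     cmp C \<psi> \<phi> = idm C A \<and> cmp C \<phi> \<psi> = idm C B"

definition invertible :: "('o, 'm, 'z) dcat_scheme \<Rightarrow> 'o \<Rightarrow> 'o \<Rightarrow> 'm \<Rightarrow> bool" where
  "invertible C A B \<phi> \<longleftrightarrow> (\<exists>\<psi>. inverse_pair C A B \<phi> \<psi>)"

definition wide_subcat :: "('o, 'm, 'z) dcat_scheme \<Rightarrow> ('o \<Rightarrow> 'o \<Rightarrow> 'm set) \<Rightarrow> bool" where
  "wide_subcat C S \<longleftrightarrow>
     (\<forall>A B. S A B \<subseteq> hom C A B) \<and>
     (\<forall>A \<in> obj C. idm C A \<in> S A A) \<and>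
     (\<forall>A B Z f g. f \<in> S A B \<longrightarrow> g \<in> S B Z \<longrightarrow> cmp C g f \<in> S A Z)"

definition d_category :: "('o, 'm, 'z) dcat_scheme \<Rightarrow> bool" where
  "d_category C \<longleftrightarrow> category C \<and> wide_subcat C (fwd C) \<and> wide_subcat C (bwd C) \<and>
     (\<forall>A B \<phi> \<psi>. inverse_pair C A B \<phi> \<psi> \<longrightarrow> (\<phi> \<in> fwd C A B \<longleftrightarrow> \<psi> \<in> bwd C B A))"

text \<open>A presheaf X : C^op -> Set: el X U is the set X[U]; for \<phi> : V -> U,
  act X V U \<phi> is the map X[\<phi>] : X[U] -> X[V].\<close>

record ('o, 'm, 'x) automaton =
  el :: "'o \<Rightarrow> 'x set"
  act :: "'o \<Rightarrow> 'o \<Rightarrow> 'm \<Rightarrow> 'x \<Rightarrow> 'x"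
  start :: "('o \<times> 'x) set"
  accept :: "('o \<times> 'x) set"

definition elements :: "('o, 'm, 'z) dcat_scheme \<Rightarrow> ('o, 'm, 'x) automaton \<Rightarrow> ('o \<times> 'x) set" where
  "elements C X = {(U, x). U \<in> obj C \<and> x \<in> el X U}"

definition presheaf :: "('o, 'm, 'z) dcat_scheme \<Rightarrow> ('o, 'm, 'x) automaton \<Rightarrow> bool" where
  "presheaf C X \<longleftrightarrow>
     (\<forall>V U \<phi> x. \<phi> \<in> hom C V U \<longrightarrow> x \<in> el X U \<longrightarrow> act X V U \<phi> x \<in> el X V) \<and>
     (\<forall>U \<in> obj C. \<forall>x \<in> el X U. act X U U (idm C U) x = x) \<and>
     (\<forall>W V U \<phi> \<psi> x. \<phi> \<in> hom C W V \<longrightarrow> \<psi> \<in> hom C V U \<longrightarrow> x \<in> el X U \<longrightarrow>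
        act X W U (cmp C \<psi> \<phi>) x = act X W V \<phi> (act X V U \<psi> x))"

definition is_automaton :: "('o, 'm, 'z) dcat_scheme \<Rightarrow> ('o, 'm, 'x) automaton \<Rightarrow> bool" where
  "is_automaton C X \<longleftrightarrow> presheaf C X \<and> start X \<subseteq> elements C X \<and> accept X \<subseteq> elements C X"

definition presheaf_map :: "('o, 'm, 'z) dcat_scheme \<Rightarrow> ('o, 'm, 'y) automaton \<Rightarrow>
    ('o, 'm, 'x) automaton \<Rightarrow> ('o \<Rightarrow> 'y \<Rightarrow> 'x) \<Rightarrow> bool" where
  "presheaf_map C Y X f \<longleftrightarrow>
     (\<forall>U \<in> obj C. \<forall>y \<in> el Y U. f U y \<in> el X U) \<and>
     (\<forall>V U \<phi> y. \<phi> \<in> hom C V U \<longrightarrow> y \<in> el Y U \<longrightarrow> f V (act Y V U \<phi> y) = act X V U \<phi> (f U y))"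

definition el_image :: "('o \<Rightarrow> 'y \<Rightarrow> 'x) \<Rightarrow> ('o \<times> 'y) set \<Rightarrow> ('o \<times> 'x) set" where
  "el_image f S = {(U, f U y) | U y. (U, y) \<in> S}"

definition aut_mor :: "('o, 'm, 'z) dcat_scheme \<Rightarrow> ('o, 'm, 'y) automaton \<Rightarrow>
    ('o, 'm, 'x) automaton \<Rightarrow> ('o \<Rightarrow> 'y \<Rightarrow> 'x) \<Rightarrow> bool" where
  "aut_mor C Y X f \<longleftrightarrow> presheaf_map C Y X f \<and>
     el_image f (start Y) \<subseteq> start X \<and> el_image f (accept Y) \<subseteq> accept X"

definition aut_iso :: "('o, 'm, 'z) dcat_scheme \<Rightarrow> ('o, 'm, 'y) automaton \<Rightarrow>
    ('o, 'm, 'x) automaton \<Rightarrow> bool" where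
  "aut_iso C Y X \<longleftrightarrow> (\<exists>f g. aut_mor C Y X f \<and> aut_mor C X Y g \<and>
     (\<forall>U \<in> obj C. \<forall>y \<in> el Y U. g U (f U y) = y) \<and>
     (\<forall>U \<in> obj C. \<forall>x \<in> el X U. f U (g U x) = x))"

definition future_open :: "('o, 'm, 'z) dcat_scheme \<Rightarrow> ('o, 'm, 'y) automaton \<Rightarrow>
    ('o, 'm, 'x) automaton \<Rightarrow> ('o \<Rightarrow> 'y \<Rightarrow> 'x) \<Rightarrow> bool" where
  "future_open C Y X f \<longleftrightarrow>
     (\<forall>V U \<phi> y x. \<phi> \<in> fwd C V U \<longrightarrow> y \<in> el Y V \<longrightarrow> x \<in> el X U \<longrightarrow>
        act X V U \<phi> x = f V y \<longrightarrow>
        (\<exists>y' \<in> el Y U. act Y V U \<phi> y' = y \<and> f U y' = x))"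

text \<open>A linear category is (up to isomorphism) a concatenation of n pieces,
  each S (a formorphism bot -> top), T (a backmorphism top -> bot) or I (an
  inverse pair).  A d-functor \<omega> from it into C is determined by the objects
  U 0, ..., U n (images of the vertices) and, for each k < n, the image mor k
  of the generating morphism of the k-th piece:
   S: mor k \<in> C+(U k, U (k+1));  T: mor k \<in> C-(U (k+1), U k);
   I: mor k : U k -> U (k+1) invertible (its inverse being the image of the
      inverse morphism).\<close>

datatype piece = PS | PT | PI

definition is_path :: "('o, 'm, 'z) dcat_scheme \<Rightarrow> nat \<Rightarrow> (nat \<Rightarrow> 'o) \<Rightarrow> (nat \<Rightarrow> piece) \<Rightarrow>
    (nat \<Rightarrow> 'm) \<Rightarrow> bool" where
  "is_path C n U kd mor \<longleftrightarrow>
     (\<forall>k \<le> n. U k \<in> obj C) \<and>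
     (\<forall>k < n.
        (kd k = PS \<longrightarrow> mor k \<in> fwd C (U k) (U (Suc k))) \<and>
        (kd k = PT \<longrightarrow> mor k \<in> bwd C (U (Suc k)) (U k)) \<and>
        (kd k = PI \<longrightarrow> invertible C (U k) (U (Suc k)) (mor k)))"

text \<open>The colimit of the representables C(-, U k) along the path, computed
  pointwise: the quotient of the disjoint union of the hom-sets C(V, U k),
  k \<le> n, by the equivalence relation generated by the generating morphisms
  of the linear category.\<close>

definition trk_step :: "('o, 'm, 'z) dcat_scheme \<Rightarrow> nat \<Rightarrow> (nat \<Rightarrow> 'o) \<Rightarrow> (nat \<Rightarrow> piece) \<Rightarrow>
    (nat \<Rightarrow> 'm) \<Rightarrow> 'o \<Rightarrow> nat \<times> 'm \<Rightarrow> nat \<times> 'm \<Rightarrow> bool" where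
  "trk_step C n U kd mor V p q \<longleftrightarrow> (\<exists>k < n.
     (kd k \<noteq> PT \<and> (\<exists>g \<in> hom C V (U k). p = (k, g) \<and> q = (Suc k, cmp C (mor k) g))) \<or>
     (kd k = PT \<and> (\<exists>g \<in> hom C V (U (Suc k)). p = (Suc k, g) \<and> q = (k, cmp C (mor k) g))))"

definition trk_eq :: "('o, 'm, 'z) dcat_scheme \<Rightarrow> nat \<Rightarrow> (nat \<Rightarrow> 'o) \<Rightarrow> (nat \<Rightarrow> piece) \<Rightarrow>
    (nat \<Rightarrow> 'm) \<Rightarrow> 'o \<Rightarrow> nat \<times> 'm \<Rightarrow> nat \<times> 'm \<Rightarrow> bool" where
  "trk_eq C n U kd mor V = (symclp (trk_step C n U kd mor V))\<^sup>*\<^sup>*"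

definition trk_class :: "('o, 'm, 'z) dcat_scheme \<Rightarrow> nat \<Rightarrow> (nat \<Rightarrow> 'o) \<Rightarrow> (nat \<Rightarrow> piece) \<Rightarrow>
    (nat \<Rightarrow> 'm) \<Rightarrow> 'o \<Rightarrow> nat \<times> 'm \<Rightarrow> (nat \<times> 'm) set" where
  "trk_class C n U kd mor V p = {q. trk_eq C n U kd mor V p q}"

definition track_aut :: "('o, 'm, 'z) dcat_scheme \<Rightarrow> nat \<Rightarrow> (nat \<Rightarrow> 'o) \<Rightarrow> (nat \<Rightarrow> piece) \<Rightarrow>
    (nat \<Rightarrow> 'm) \<Rightarrow> ('o, 'm, (nat \<times> 'm) set) automaton" where
  "track_aut C n U kd mor =
     \<lparr> el = (\<lambda>V. {trk_class C n U kd mor V (k, g) | k g. k \<le> n \<and> g \<in> hom C V (U k)}),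
       act = (\<lambda>W V h c. {q. \<exists>(k, g) \<in> c. trk_eq C n U kd mor W (k, cmp C g h) q}),
       start = {(U 0, trk_class C n U kd mor (U 0) (0, idm C (U 0)))},
       accept = {(U n, trk_class C n U kd mor (U n) (n, idm C (U n)))} \<rparr>"

definition track_object :: "('o, 'm, 'z) dcat_scheme \<Rightarrow> ('o, 'm, 'g) automaton \<Rightarrow> bool" where
  "track_object C \<Gamma> \<longleftrightarrow> is_automaton C \<Gamma> \<and>
     (\<exists>n U kd mor. is_path C n U kd mor \<and> aut_iso C \<Gamma> (track_aut C n U kd mor))"

text \<open>Lang(X): track objects admitting a morphism of automata into X
  (track objects are taken with an arbitrary but fixed carrier type 'g).\<close>

definition Lang :: "('o, 'm, 'z) dcat_scheme \<Rightarrow> ('o, 'm, 'x) automaton \<Rightarrow> ('o, 'm, 'g) automaton set" where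
  "Lang C X = {\<Gamma>. track_object C \<Gamma> \<and> (\<exists>h. aut_mor C \<Gamma> X h)}"

end

theory Submission
  imports Defs
begin

lemma cat_objs: "category C \<Longrightarrow> g \<in> hom C A B \<Longrightarrow> A \<in> obj C \<and> B \<in> obj C"
  unfolding category_def by blast
lemma cat_id: "category C \<Longrightarrow> A \<in> obj C \<Longrightarrow> idm C A \<in> hom C A A"
  unfolding category_def by blast
lemma cat_cmp: "category C \<Longrightarrow> f \<in> hom C A B \<Longrightarrow> g \<in> hom C B Z \<Longrightarrow> cmp C g f \<in> hom C A Z"
  unfolding category_def by blast
lemma cat_idl: "category C \<Longrightarrow> f \<in> hom C A B \<Longrightarrow> cmp C (idm C B) f = f"
  unfolding category_def by blast
lemma cat_idr: "category C \<Longrightarrow> f \<in> hom C A B \<Longrightarrow> cmp C f (idm C A) = f"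
  unfolding category_def by blast
lemma cat_assoc: "category C \<Longrightarrow> f \<in> hom C A B \<Longrightarrow> g \<in> hom C B Z \<Longrightarrow> h \<in> hom C Z W \<Longrightarrow>
   cmp C h (cmp C g f) = cmp C (cmp C h g) f"
  unfolding category_def by blast

lemma psh_el: "presheaf C X \<Longrightarrow> \<phi> \<in> hom C V U \<Longrightarrow> x \<in> el X U \<Longrightarrow> act X V U \<phi> x \<in> el X V"
  unfolding presheaf_def by blast
lemma psh_id: "presheaf C X \<Longrightarrow> U \<in> obj C \<Longrightarrow> x \<in> el X U \<Longrightarrow> act X U U (idm C U) x = x"
  unfolding presheaf_def by blast
lemma psh_cmp: "presheaf C X \<Longrightarrow> \<phi> \<in> hom C W V \<Longrightarrow> \<psi> \<in> hom C V U \<Longrightarrow> x \<in> el X U \<Longrightarrow>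
   act X W U (cmp C \<psi> \<phi>) x = act X W V \<phi> (act X V U \<psi> x)"
  unfolding presheaf_def by blast

lemma el_image_comp: "el_image (\<lambda>U a. g U (f U a)) S = el_image g (el_image f S)"
  unfolding el_image_def by auto
lemma el_image_mono: "A \<subseteq> B \<Longrightarrow> el_image g A \<subseteq> el_image g B"
  unfolding el_image_def by auto

lemma el_image_iff: "(a, b) \<in> el_image f S \<longleftrightarrow> (\<exists>y. (a, y) \<in> S \<and> b = f a y)"
  unfolding el_image_def by auto

lemma aut_mor_comp:
  assumes cat: "category C" and f: "aut_mor C A B f" and g: "aut_mor C B D g"
  shows "aut_mor C A D (\<lambda>U a. g U (f U a))"
proof -
  have pf: "presheaf_map C A B f" and pg: "presheaf_map C B D g"
    using f g unfolding aut_mor_def by auto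
  have "presheaf_map C A D (\<lambda>U a. g U (f U a))"
    unfolding presheaf_map_def
  proof (intro conjI allI ballI impI)
    fix U a assume "U \<in> obj C" "a \<in> el A U"
    then show "g U (f U a) \<in> el D U" using pf pg unfolding presheaf_map_def by blast
  next
    fix V U \<phi> a assume ph: "\<phi> \<in> hom C V U" and a: "a \<in> el A U"
    have U: "U \<in> obj C" using cat_objs[OF cat ph] by blast
    have fa: "f U a \<in> el B U" using pf U a unfolding presheaf_map_def by blast
    have "f V (act A V U \<phi> a) = act B V U \<phi> (f U a)" using pf ph a unfolding presheaf_map_def by blast
    moreover have "g V (act B V U \<phi> (f U a)) = act D V U \<phi> (g U (f U a))"
      using pg ph fa unfolding presheaf_map_def by blast
    ultimately show "g V (f V (act A V U \<phi> a)) = act D V U \<phi> (g U (f U a))" by simp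
  qed
  moreover have "el_image (\<lambda>U a. g U (f U a)) (start A) \<subseteq> start D"
    using f g unfolding aut_mor_def el_image_comp using el_image_mono by blast
  moreover have "el_image (\<lambda>U a. g U (f U a)) (accept A) \<subseteq> accept D"
    using f g unfolding aut_mor_def el_image_comp using el_image_mono by blast
  ultimately show ?thesis unfolding aut_mor_def by blast
qed

lemma ws_hom: "wide_subcat C S \<Longrightarrow> \<phi> \<in> S A B \<Longrightarrow> \<phi> \<in> hom C A B"
  unfolding wide_subcat_def by blast
lemma dcat_bwd: "d_category C \<Longrightarrow> \<phi> \<in> bwd C A B \<Longrightarrow> \<phi> \<in> hom C A B"
  by (rule ws_hom[of C "bwd C"]) (simp_all add: d_category_def)
lemma dcat_fwd: "d_category C \<Longrightarrow> \<phi> \<in> fwd C A B \<Longrightarrow> \<phi> \<in> hom C A B"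
  by (rule ws_hom[of C "fwd C"]) (simp_all add: d_category_def)

locale trk =
  fixes C :: "('o, 'm) dcat" and n :: nat and U :: "nat \<Rightarrow> 'o" and kd :: "nat \<Rightarrow> piece"
    and mor :: "nat \<Rightarrow> 'm"
  assumes dcat: "d_category C" and path: "is_path C n U kd mor"
begin

lemma cat: "category C" using dcat by (simp add: d_category_def)

lemma Uobj: "k \<le> n \<Longrightarrow> U k \<in> obj C" using path unfolding is_path_def by blast

lemma mor_hom1: "k < n \<Longrightarrow> kd k \<noteq> PT \<Longrightarrow> mor k \<in> hom C (U k) (U (Suc k))"
proof -
  assume k: "k < n" "kd k \<noteq> PT"
  show ?thesis
  proof (cases "kd k")
    case PS
    then have "mor k \<in> fwd C (U k) (U (Suc k))" using path k unfolding is_path_def by blast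
    then show ?thesis using dcat_fwd[OF dcat] by blast
  next
    case PI
    then have "invertible C (U k) (U (Suc k)) (mor k)" using path k unfolding is_path_def by blast
    then show ?thesis unfolding invertible_def inverse_pair_def by blast
  qed (use k in auto)
qed

lemma mor_hom2: "k < n \<Longrightarrow> kd k = PT \<Longrightarrow> mor k \<in> hom C (U (Suc k)) (U k)"
proof -
  assume k: "k < n" "kd k = PT"
  then have "mor k \<in> bwd C (U (Suc k)) (U k)" using path unfolding is_path_def by blast
  then show ?thesis using dcat_bwd[OF dcat] by blast
qed

definition valid :: "'o \<Rightarrow> nat \<times> 'm \<Rightarrow> bool" where
  "valid V p \<longleftrightarrow> fst p \<le> n \<and> snd p \<in> hom C V (U (fst p))"

abbreviation "T \<equiv> track_aut C n U kd mor"
abbreviation "step \<equiv> trk_step C n U kd mor"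
abbreviation "teq \<equiv> trk_eq C n U kd mor"
abbreviation "cls \<equiv> trk_class C n U kd mor"

lemma step_pre:
  assumes s: "step V p q" and ph: "\<phi> \<in> hom C W V"
  shows "step W (fst p, cmp C (snd p) \<phi>) (fst q, cmp C (snd q) \<phi>)"
proof -
  from s obtain k where k: "k < n" and
    c: "(kd k \<noteq> PT \<and> (\<exists>g \<in> hom C V (U k). p = (k, g) \<and> q = (Suc k, cmp C (mor k) g))) \<or>
     (kd k = PT \<and> (\<exists>g \<in> hom C V (U (Suc k)). p = (Suc k, g) \<and> q = (k, cmp C (mor k) g)))"
    unfolding trk_step_def by blast
  from c show ?thesis
  proof
    assume "kd k \<noteq> PT \<and> (\<exists>g \<in> hom C V (U k). p = (k, g) \<and> q = (Suc k, cmp C (mor k) g))"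
    then obtain g where a: "kd k \<noteq> PT" "g \<in> hom C V (U k)" "p = (k, g)" "q = (Suc k, cmp C (mor k) g)"
      by blast
    have "cmp C (cmp C (mor k) g) \<phi> = cmp C (mor k) (cmp C g \<phi>)"
      using cat_assoc[OF cat ph a(2) mor_hom1[OF k a(1)]] by simp
    moreover have "cmp C g \<phi> \<in> hom C W (U k)" using cat_cmp[OF cat ph a(2)] .
    ultimately show ?thesis using a k unfolding trk_step_def by auto
  next
    assume "kd k = PT \<and> (\<exists>g \<in> hom C V (U (Suc k)). p = (Suc k, g) \<and> q = (k, cmp C (mor k) g))"
    then obtain g where a: "kd k = PT" "g \<in> hom C V (U (Suc k))" "p = (Suc k, g)" "q = (k, cmp C (mor k) g)"
      by blast
    have "cmp C (cmp C (mor k) g) \<phi> = cmp C (mor k) (cmp C g \<phi>)"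
      using cat_assoc[OF cat ph a(2) mor_hom2[OF k a(1)]] by simp
    moreover have "cmp C g \<phi> \<in> hom C W (U (Suc k))" using cat_cmp[OF cat ph a(2)] .
    ultimately show ?thesis using a k unfolding trk_step_def by auto
  qed
qed

lemma teq_pre:
  assumes "teq V p q" and ph: "\<phi> \<in> hom C W V"
  shows "teq W (fst p, cmp C (snd p) \<phi>) (fst q, cmp C (snd q) \<phi>)"
  using assms(1) unfolding trk_eq_def
proof (induction rule: rtranclp_induct)
  case base then show ?case by simp
next
  case (step y z)
  from step.hyps(2) have "symclp (step W) (fst y, cmp C (snd y) \<phi>) (fst z, cmp C (snd z) \<phi>)"
    using step_pre[OF _ ph] unfolding symclp_def by blast
  with step.IH show ?case by (meson rtranclp.rtrancl_into_rtrancl)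
qed

lemma teq_refl: "teq V p p" unfolding trk_eq_def by simp
lemma teq_sym: "teq V p q \<Longrightarrow> teq V q p" unfolding trk_eq_def by (rule rtranclp_symclp_sym)
lemma teq_trans: "teq V p q \<Longrightarrow> teq V q r \<Longrightarrow> teq V p r" unfolding trk_eq_def by simp

lemma cls_eq: "teq V p q \<Longrightarrow> cls V p = cls V q"
  unfolding trk_class_def using teq_sym teq_trans by blast

lemma step_cls: "step V p q \<Longrightarrow> cls V p = cls V q"
  by (rule cls_eq) (simp add: trk_eq_def r_into_rtranclp)

lemma act_cls:
  assumes ph: "\<phi> \<in> hom C W V"
  shows "act T W V \<phi> (cls V (k, g)) = cls W (k, cmp C g \<phi>)"
proof -
  have "act T W V \<phi> (cls V (k, g)) = {q. \<exists>(k', g') \<in> cls V (k, g). teq W (k', cmp C g' \<phi>) q}"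
    unfolding track_aut_def by simp
  also have "\<dots> = cls W (k, cmp C g \<phi>)"
  proof (rule set_eqI, rule iffI)
    fix q assume "q \<in> {q. \<exists>(k', g') \<in> cls V (k, g). teq W (k', cmp C g' \<phi>) q}"
    then obtain k' g' where a: "teq V (k, g) (k', g')" "teq W (k', cmp C g' \<phi>) q"
      unfolding trk_class_def by blast
    have "teq W (k, cmp C g \<phi>) (k', cmp C g' \<phi>)" using teq_pre[OF a(1) ph] by simp
    then show "q \<in> cls W (k, cmp C g \<phi>)" using a(2) teq_trans unfolding trk_class_def by blast
  next
    fix q assume "q \<in> cls W (k, cmp C g \<phi>)"
    moreover have "(k, g) \<in> cls V (k, g)" unfolding trk_class_def using teq_refl by blast
    ultimately show "q \<in> {q. \<exists>(k', g') \<in> cls V (k, g). teq W (k', cmp C g' \<phi>) q}"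
      unfolding trk_class_def by blast
  qed
  finally show ?thesis .
qed

lemma el_T: "el T V = {cls V (k, g) | k g. k \<le> n \<and> g \<in> hom C V (U k)}"
  unfolding track_aut_def by simp

lemma cls_id_el: "k \<le> n \<Longrightarrow> cls (U k) (k, idm C (U k)) \<in> el T (U k)"
  unfolding el_T using cat_id[OF cat Uobj] by blast

lemma eval_rel:
  assumes H: "presheaf_map C T X H" and k: "k < n"
  defines "x \<equiv> \<lambda>k. H (U k) (cls (U k) (k, idm C (U k)))"
  shows "(kd k \<noteq> PT \<longrightarrow> x k = act X (U k) (U (Suc k)) (mor k) (x (Suc k))) \<and>
         (kd k = PT \<longrightarrow> x (Suc k) = act X (U (Suc k)) (U k) (mor k) (x k))"
proof (intro conjI impI)
  assume a: "kd k \<noteq> PT"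
  have m: "mor k \<in> hom C (U k) (U (Suc k))" using mor_hom1[OF k a] .
  have "step (U k) (k, idm C (U k)) (Suc k, cmp C (mor k) (idm C (U k)))"
    unfolding trk_step_def using k a cat_id[OF cat Uobj[of k]] by auto
  then have "cls (U k) (k, idm C (U k)) = cls (U k) (Suc k, mor k)"
    using step_cls cat_idr[OF cat m] by simp
  also have "\<dots> = act T (U k) (U (Suc k)) (mor k) (cls (U (Suc k)) (Suc k, idm C (U (Suc k))))"
    using act_cls[OF m] cat_idl[OF cat m] by simp
  finally have "x k = H (U k) (act T (U k) (U (Suc k)) (mor k) (cls (U (Suc k)) (Suc k, idm C (U (Suc k)))))"
    unfolding x_def by simp
  also have "\<dots> = act X (U k) (U (Suc k)) (mor k) (x (Suc k))"
    using H m cls_id_el[of "Suc k"] k unfolding presheaf_map_def x_def by auto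
  finally show "x k = act X (U k) (U (Suc k)) (mor k) (x (Suc k))" .
next
  assume a: "kd k = PT"
  have m: "mor k \<in> hom C (U (Suc k)) (U k)" using mor_hom2[OF k a] .
  have "step (U (Suc k)) (Suc k, idm C (U (Suc k))) (k, cmp C (mor k) (idm C (U (Suc k))))"
    unfolding trk_step_def using k a cat_id[OF cat Uobj[of "Suc k"]] by auto
  then have "cls (U (Suc k)) (Suc k, idm C (U (Suc k))) = cls (U (Suc k)) (k, mor k)"
    using step_cls cat_idr[OF cat m] by simp
  also have "\<dots> = act T (U (Suc k)) (U k) (mor k) (cls (U k) (k, idm C (U k)))"
    using act_cls[OF m] cat_idl[OF cat m] by simp
  finally have "x (Suc k) = H (U (Suc k)) (act T (U (Suc k)) (U k) (mor k) (cls (U k) (k, idm C (U k))))"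
    unfolding x_def by simp
  also have "\<dots> = act X (U (Suc k)) (U k) (mor k) (x k)"
    using H m cls_id_el[of k] k unfolding presheaf_map_def x_def by auto
  finally show "x (Suc k) = act X (U (Suc k)) (U k) (mor k) (x k)" .
qed

definition val :: "('o, 'm, 'y) automaton \<Rightarrow> (nat \<Rightarrow> 'y) \<Rightarrow> 'o \<Rightarrow> nat \<times> 'm \<Rightarrow> 'y" where
  "val Y z V p = act Y V (U (fst p)) (snd p) (z (fst p))"

definition liftm :: "('o, 'm, 'y) automaton \<Rightarrow> (nat \<Rightarrow> 'y) \<Rightarrow> 'o \<Rightarrow> (nat \<times> 'm) set \<Rightarrow> 'y" where
  "liftm Y z V c = val Y z V (SOME p. p \<in> c \<and> valid V p)"

context
  fixes Y :: "('o, 'm, 'y) automaton" and z :: "nat \<Rightarrow> 'y"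
  assumes Y: "presheaf C Y"
    and zel: "\<And>k. k \<le> n \<Longrightarrow> z k \<in> el Y (U k)"
    and compat: "\<And>k. k < n \<Longrightarrow> (kd k \<noteq> PT \<longrightarrow> act Y (U k) (U (Suc k)) (mor k) (z (Suc k)) = z k) \<and>
         (kd k = PT \<longrightarrow> act Y (U (Suc k)) (U k) (mor k) (z k) = z (Suc k))"
begin

lemma step_val: "step V p q \<Longrightarrow> valid V p \<and> valid V q \<and> val Y z V p = val Y z V q"
proof -
  assume s: "step V p q"
  from s obtain k where k: "k < n" and
    c: "(kd k \<noteq> PT \<and> (\<exists>g \<in> hom C V (U k). p = (k, g) \<and> q = (Suc k, cmp C (mor k) g))) \<or>
     (kd k = PT \<and> (\<exists>g \<in> hom C V (U (Suc k)). p = (Suc k, g) \<and> q = (k, cmp C (mor k) g)))"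
    unfolding trk_step_def by blast
  from c show ?thesis
  proof
    assume "kd k \<noteq> PT \<and> (\<exists>g \<in> hom C V (U k). p = (k, g) \<and> q = (Suc k, cmp C (mor k) g))"
    then obtain g where a: "kd k \<noteq> PT" "g \<in> hom C V (U k)" "p = (k, g)" "q = (Suc k, cmp C (mor k) g)"
      by blast
    have m: "mor k \<in> hom C (U k) (U (Suc k))" using mor_hom1[OF k a(1)] .
    have "val Y z V q = act Y V (U k) g (act Y (U k) (U (Suc k)) (mor k) (z (Suc k)))"
      unfolding val_def using a psh_cmp[OF Y a(2) m zel[of "Suc k"]] k by simp
    also have "\<dots> = val Y z V p" unfolding val_def using a compat[OF k] by simp
    finally show ?thesis using a k cat_cmp[OF cat a(2) m] unfolding valid_def by simp
  next
    assume "kd k = PT \<and> (\<exists>g \<in> hom C V (U (Suc k)). p = (Suc k, g) \<and> q = (k, cmp C (mor k) g))"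
    then obtain g where a: "kd k = PT" "g \<in> hom C V (U (Suc k))" "p = (Suc k, g)" "q = (k, cmp C (mor k) g)"
      by blast
    have m: "mor k \<in> hom C (U (Suc k)) (U k)" using mor_hom2[OF k a(1)] .
    have "val Y z V q = act Y V (U (Suc k)) g (act Y (U (Suc k)) (U k) (mor k) (z k))"
      unfolding val_def using a psh_cmp[OF Y a(2) m zel[of k]] k by simp
    also have "\<dots> = val Y z V p" unfolding val_def using a compat[OF k] by simp
    finally show ?thesis using a k cat_cmp[OF cat a(2) m] unfolding valid_def by simp
  qed
qed

lemma teq_val: "teq V p q \<Longrightarrow> valid V p \<Longrightarrow> valid V q \<and> val Y z V p = val Y z V q"
  unfolding trk_eq_def
proof (induction rule: rtranclp_induct)
  case base then show ?case by simp
next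
  case (step y w)
  from step.hyps(2) have "valid V w \<and> val Y z V y = val Y z V w"
    unfolding symclp_def using step_val by (metis sup2E conversepD)
  with step.IH step.prems show ?case by simp
qed

lemma liftm_cls: "valid V p \<Longrightarrow> liftm Y z V (cls V p) = val Y z V p"
proof -
  assume v: "valid V p"
  have ex: "\<exists>q. q \<in> cls V p \<and> valid V q" using v teq_refl unfolding trk_class_def by blast
  let ?q = "SOME q. q \<in> cls V p \<and> valid V q"
  have "?q \<in> cls V p" using someI_ex[OF ex] by blast
  then have "teq V p ?q" unfolding trk_class_def by simp
  then show ?thesis unfolding liftm_def using teq_val v by simp
qed

lemma liftm_map: "presheaf_map C T Y (liftm Y z)"
  unfolding presheaf_map_def
proof (intro conjI allI ballI impI)
  fix V c assume V: "V \<in> obj C" and c: "c \<in> el T V"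
  then obtain k g where kg: "k \<le> n" "g \<in> hom C V (U k)" "c = cls V (k, g)" unfolding el_T by blast
  then have "liftm Y z V c = act Y V (U k) g (z k)"
    using liftm_cls[of V "(k, g)"] unfolding valid_def val_def by simp
  then show "liftm Y z V c \<in> el Y V" using psh_el[OF Y kg(2) zel[OF kg(1)]] by simp
next
  fix W V \<phi> c assume ph: "\<phi> \<in> hom C W V" and c: "c \<in> el T V"
  then obtain k g where kg: "k \<le> n" "g \<in> hom C V (U k)" "c = cls V (k, g)" unfolding el_T by blast
  have g2: "cmp C g \<phi> \<in> hom C W (U k)" using cat_cmp[OF cat ph kg(2)] .
  have "liftm Y z W (act T W V \<phi> c) = liftm Y z W (cls W (k, cmp C g \<phi>))"
    using act_cls[OF ph] kg by simp
  also have "\<dots> = act Y W (U k) (cmp C g \<phi>) (z k)"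
    using liftm_cls[of W "(k, cmp C g \<phi>)"] g2 kg unfolding valid_def val_def by simp
  also have "\<dots> = act Y W V \<phi> (act Y V (U k) g (z k))" using psh_cmp[OF Y ph kg(2) zel[OF kg(1)]] .
  also have "\<dots> = act Y W V \<phi> (liftm Y z V c)"
    using liftm_cls[of V "(k, g)"] kg unfolding valid_def val_def by simp
  finally show "liftm Y z W (act T W V \<phi> c) = act Y W V \<phi> (liftm Y z V c)" .
qed

lemma liftm_id: "k \<le> n \<Longrightarrow> liftm Y z (U k) (cls (U k) (k, idm C (U k))) = z k"
  using liftm_cls[of "U k" "(k, idm C (U k))"] cat_id[OF cat Uobj[of k]]
    psh_id[OF Y Uobj[of k] zel[of k]] unfolding valid_def val_def by simp

end

end

primrec lseq :: "('o, 'm) dcat \<Rightarrow> ('o, 'm, 'y) automaton \<Rightarrow> ('o \<Rightarrow> 'y \<Rightarrow> 'x) \<Rightarrow>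
   (nat \<Rightarrow> 'o) \<Rightarrow> (nat \<Rightarrow> piece) \<Rightarrow> (nat \<Rightarrow> 'm) \<Rightarrow> (nat \<Rightarrow> 'x) \<Rightarrow> nat \<Rightarrow> 'y" where
  "lseq C Y f U kd mor x 0 = (SOME y. (U 0, y) \<in> start Y \<and> f (U 0) y = x 0)"
| "lseq C Y f U kd mor x (Suc k) = (case kd k of
      PS \<Rightarrow> (SOME y'. y' \<in> el Y (U (Suc k)) \<and>
              act Y (U k) (U (Suc k)) (mor k) y' = lseq C Y f U kd mor x k \<and> f (U (Suc k)) y' = x (Suc k))
    | PT \<Rightarrow> act Y (U (Suc k)) (U k) (mor k) (lseq C Y f U kd mor x k)
    | PI \<Rightarrow> act Y (U (Suc k)) (U k) (SOME \<psi>. inverse_pair C (U k) (U (Suc k)) (mor k) \<psi>)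
              (lseq C Y f U kd mor x k))"

theorem proposition12:
  fixes C :: "('o, 'm) dcat"
    and X :: "('o, 'm, 'x) automaton"
    and Y :: "('o, 'm, 'y) automaton"
    and f :: "'o \<Rightarrow> 'y \<Rightarrow> 'x"
  assumes "d_category C"
    and "is_automaton C X"
    and "is_automaton C Y"
    and "aut_mor C Y X f"
    and "future_open C Y X f"
    and "start X \<subseteq> el_image f (start Y)"
    and "accept Y = {(U, y) \<in> elements C Y. (U, f U y) \<in> accept X}"
  shows "(Lang C Y :: ('o, 'm, 'g) automaton set) = Lang C X"
proof -
  have cat: "category C" using assms(1) by (simp add: d_category_def)
  have pX: "presheaf C X" and pY: "presheaf C Y" using assms(2,3) unfolding is_automaton_def by auto
  have pf: "presheaf_map C Y X f" using assms(4) unfolding aut_mor_def by blast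
  show ?thesis
  proof (rule set_eqI, rule iffI)
    fix \<Gamma> :: "('o, 'm, 'g) automaton"
    assume "\<Gamma> \<in> Lang C Y"
    then obtain h where "track_object C \<Gamma>" "aut_mor C \<Gamma> Y h" unfolding Lang_def by blast
    then show "\<Gamma> \<in> Lang C X" unfolding Lang_def using aut_mor_comp[OF cat _ assms(4)] by blast
  next
    fix \<Gamma> :: "('o, 'm, 'g) automaton"
    assume G: "\<Gamma> \<in> Lang C X"
    then obtain h where tro: "track_object C \<Gamma>" and h: "aut_mor C \<Gamma> X h" unfolding Lang_def by blast
    then obtain n U kd mor where path: "is_path C n U kd mor" and iso: "aut_iso C \<Gamma> (track_aut C n U kd mor)"
      unfolding track_object_def by blast
    then obtain F G where F: "aut_mor C \<Gamma> (track_aut C n U kd mor) F"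
      and G: "aut_mor C (track_aut C n U kd mor) \<Gamma> G" unfolding aut_iso_def by blast
    have tr: "trk C n U kd mor" using assms(1) path by (simp add: trk_def)
    define H where "H = (\<lambda>V c. h V (G V c))"
    have H: "aut_mor C (track_aut C n U kd mor) X H" unfolding H_def using aut_mor_comp[OF cat G h] .
    have pH: "presheaf_map C (track_aut C n U kd mor) X H" using H unfolding aut_mor_def by blast
    define x where "x = (\<lambda>k. H (U k) (trk_class C n U kd mor (U k) (k, idm C (U k))))"
    have xel: "x k \<in> el X (U k)" if "k \<le> n" for k
      using pH trk.cls_id_el[OF tr that] trk.Uobj[OF tr that] unfolding x_def presheaf_map_def by blast
    have xrel: "(kd k \<noteq> PT \<longrightarrow> x k = act X (U k) (U (Suc k)) (mor k) (x (Suc k))) \<and>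
         (kd k = PT \<longrightarrow> x (Suc k) = act X (U (Suc k)) (U k) (mor k) (x k))" if "k < n" for k
      using trk.eval_rel[OF tr pH that] unfolding x_def by simp
    have sT: "start (track_aut C n U kd mor) = {(U 0, trk_class C n U kd mor (U 0) (0, idm C (U 0)))}"
      by (simp add: track_aut_def)
    have aT: "accept (track_aut C n U kd mor) = {(U n, trk_class C n U kd mor (U n) (n, idm C (U n)))}"
      by (simp add: track_aut_def)
    have eis: "\<And>g a b. el_image g {(a,b)} = {(a, g a b)}" unfolding el_image_def by auto
    have "el_image H (start (track_aut C n U kd mor)) \<subseteq> start X" using H unfolding aut_mor_def by blast
    then have xstart: "(U 0, x 0) \<in> start X" unfolding sT eis x_def by simp
    have "el_image H (accept (track_aut C n U kd mor)) \<subseteq> accept X" using H unfolding aut_mor_def by blast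
    then have xacc: "(U n, x n) \<in> accept X" unfolding aT eis x_def by simp
    define z where "z = lseq C Y f U kd mor x"
    have z0: "(U 0, z 0) \<in> start Y \<and> f (U 0) (z 0) = x 0"
    proof -
      have "(U 0, x 0) \<in> el_image f (start Y)" using xstart assms(6) by (rule subsetD[rotated])
      then have "\<exists>y. (U 0, y) \<in> start Y \<and> x 0 = f (U 0) y" unfolding el_image_iff .
      then have "\<exists>y. (U 0, y) \<in> start Y \<and> f (U 0) y = x 0" by metis
      then show ?thesis unfolding z_def lseq.simps by (rule someI_ex)
    qed
    have sucstep: "z (Suc k) \<in> el Y (U (Suc k)) \<and> f (U (Suc k)) (z (Suc k)) = x (Suc k) \<and>
        (kd k \<noteq> PT \<longrightarrow> act Y (U k) (U (Suc k)) (mor k) (z (Suc k)) = z k) \<and>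
        (kd k = PT \<longrightarrow> act Y (U (Suc k)) (U k) (mor k) (z k) = z (Suc k))"
      if k: "k < n" and zk: "z k \<in> el Y (U k)" and fk: "f (U k) (z k) = x k" for k
    proof (cases "kd k")
      case PS
      have fw: "mor k \<in> fwd C (U k) (U (Suc k))" using path k PS unfolding is_path_def by blast
      have "act X (U k) (U (Suc k)) (mor k) (x (Suc k)) = f (U k) (z k)" using xrel[OF k] PS fk by simp
      moreover have fo: "\<forall>V U \<phi> y x. \<phi> \<in> fwd C V U \<longrightarrow> y \<in> el Y V \<longrightarrow> x \<in> el X U \<longrightarrow>
        act X V U \<phi> x = f V y \<longrightarrow> (\<exists>y' \<in> el Y U. act Y V U \<phi> y' = y \<and> f U y' = x)"
        using assms(5) unfolding future_open_def by blast
      moreover have "x (Suc k) \<in> el X (U (Suc k))" using xel[of "Suc k"] k by simp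
      ultimately have "\<exists>y' \<in> el Y (U (Suc k)). act Y (U k) (U (Suc k)) (mor k) y' = z k \<and> f (U (Suc k)) y' = x (Suc k)"
        using fw zk by blast
      then have "\<exists>y'. y' \<in> el Y (U (Suc k)) \<and> act Y (U k) (U (Suc k)) (mor k) y' = z k \<and> f (U (Suc k)) y' = x (Suc k)"
        by blast
      from someI_ex[OF this] show ?thesis using PS unfolding z_def by simp
    next
      case PT
      have m: "mor k \<in> hom C (U (Suc k)) (U k)" using trk.mor_hom2[OF tr k PT] .
      have e: "z (Suc k) = act Y (U (Suc k)) (U k) (mor k) (z k)" using PT unfolding z_def by simp
      have "f (U (Suc k)) (z (Suc k)) = act X (U (Suc k)) (U k) (mor k) (f (U k) (z k))"
        using pf m zk e unfolding presheaf_map_def by simp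
      then show ?thesis using e psh_el[OF pY m zk] fk xrel[OF k] PT by simp
    next
      case PI
      have "invertible C (U k) (U (Suc k)) (mor k)" using path k PI unfolding is_path_def by blast
      then have "\<exists>\<psi>. inverse_pair C (U k) (U (Suc k)) (mor k) \<psi>" unfolding invertible_def .
      from someI_ex[OF this] obtain \<psi> where ps: "inverse_pair C (U k) (U (Suc k)) (mor k) \<psi>"
        and psd: "\<psi> = (SOME \<psi>. inverse_pair C (U k) (U (Suc k)) (mor k) \<psi>)" by blast
      have m: "mor k \<in> hom C (U k) (U (Suc k))" and p: "\<psi> \<in> hom C (U (Suc k)) (U k)"
        and c1: "cmp C \<psi> (mor k) = idm C (U k)" and c2: "cmp C (mor k) \<psi> = idm C (U (Suc k))"
        using ps unfolding inverse_pair_def by auto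
      have e: "z (Suc k) = act Y (U (Suc k)) (U k) \<psi> (z k)" using PI psd unfolding z_def by simp
      have el1: "z (Suc k) \<in> el Y (U (Suc k))" using e psh_el[OF pY p zk] by simp
      have "f (U (Suc k)) (z (Suc k)) = act X (U (Suc k)) (U k) \<psi> (x k)"
        using pf p zk e fk unfolding presheaf_map_def by simp
      also have "\<dots> = act X (U (Suc k)) (U k) \<psi> (act X (U k) (U (Suc k)) (mor k) (x (Suc k)))"
        using xrel[OF k] PI by simp
      also have "\<dots> = act X (U (Suc k)) (U (Suc k)) (cmp C (mor k) \<psi>) (x (Suc k))"
        using psh_cmp[OF pX p m xel[of "Suc k"]] k by simp
      also have "\<dots> = x (Suc k)" using c2 psh_id[OF pX trk.Uobj[OF tr, of "Suc k"] xel[of "Suc k"]] k by simp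
      finally have f1: "f (U (Suc k)) (z (Suc k)) = x (Suc k)" .
      have "act Y (U k) (U (Suc k)) (mor k) (z (Suc k)) = act Y (U k) (U k) (cmp C \<psi> (mor k)) (z k)"
        using e psh_cmp[OF pY m p zk] by simp
      also have "\<dots> = z k" using c1 psh_id[OF pY trk.Uobj[OF tr, of k] zk] k by simp
      finally show ?thesis using el1 f1 PI by simp
    qed
    have inv: "k \<le> n \<longrightarrow> z k \<in> el Y (U k) \<and> f (U k) (z k) = x k" for k
    proof (induction k)
      case 0
      then show ?case using z0 assms(3) unfolding is_automaton_def elements_def by blast
    next
      case (Suc k)
      then show ?case using sucstep[of k] by simp
    qed
    have zel: "\<And>k. k \<le> n \<Longrightarrow> z k \<in> el Y (U k)" using inv by blast
    have compat: "(kd k \<noteq> PT \<longrightarrow> act Y (U k) (U (Suc k)) (mor k) (z (Suc k)) = z k) \<and>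
         (kd k = PT \<longrightarrow> act Y (U (Suc k)) (U k) (mor k) (z k) = z (Suc k))" if k: "k < n" for k
    proof -
      have "k \<le> n" using k by simp
      then have "z k \<in> el Y (U k) \<and> f (U k) (z k) = x k" using inv by blast
      then show ?thesis using sucstep[OF k] by blast
    qed
    have L: "presheaf_map C (track_aut C n U kd mor) Y (trk.liftm C n U Y z)"
      using trk.liftm_map[OF tr pY zel compat] .
    have Lid: "\<And>k. k \<le> n \<Longrightarrow> trk.liftm C n U Y z (U k) (trk_class C n U kd mor (U k) (k, idm C (U k))) = z k"
      using trk.liftm_id[OF tr pY zel compat] .
    have "(U n, z n) \<in> elements C Y"
      using inv[of n] trk.Uobj[OF tr, of n] unfolding elements_def by simp
    moreover have "(U n, f (U n) (z n)) \<in> accept X" using inv[of n] xacc by simp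
    ultimately have "(U n, z n) \<in> {(U, y) \<in> elements C Y. (U, f U y) \<in> accept X}" by blast
    then have "(U n, z n) \<in> accept Y" using assms(7) by simp
    moreover have "(U 0, z 0) \<in> start Y" using z0 by blast
    moreover have "el_image (trk.liftm C n U Y z) (start (track_aut C n U kd mor)) = {(U 0, z 0)}"
      unfolding sT eis using Lid[of 0] by simp
    moreover have "el_image (trk.liftm C n U Y z) (accept (track_aut C n U kd mor)) = {(U n, z n)}"
      unfolding aT eis using Lid[of n] by simp
    ultimately have "aut_mor C (track_aut C n U kd mor) Y (trk.liftm C n U Y z)"
      using L unfolding aut_mor_def by simp
    then have "aut_mor C \<Gamma> Y (\<lambda>V a. trk.liftm C n U Y z V (F V a))"
      by (rule aut_mor_comp[OF cat F])
    then show "\<Gamma> \<in> Lang C Y" unfolding Lang_def using tro by blast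
  qed
qed

end
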